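(* Let $n \ge 1$, let $C \subset \mathbb{R}^n$ be compact, let $f : C \to \mathbb{R}$ be continuous, and let $\epsilon > 0$. Then there exist a positive integer $k$, parameters $W_{ij} \in \mathbb{R}^n$, $b_{ij} \in \mathbb{R}$ for $i \in \{1,2\}$, $j \in \{1,\dots,k\}$, and output-layer parameters $u_1, u_2, c \in \mathbb{R}$ such that the maxout network with two maxout hidden units \[ g(v) = u_1 h_1(v) + u_2 h_2(v) + c, \qquad h_i(v) = \max_{j \in \{1,\dots,k\}} \left( v^T W_{ij} + b_{ij} \right), \] satisfies $|f(v) - g(v)| < \epsilon$ for all $v \in C$. That is, any continuous function on a compact domain can be approximated arbitrarily well by a maxout network with two maxout hidden units, provided each maxout unit may have arbitrarily many affine components $k$.
   Context: A maxout hidden unit with $k$ affine components, acting on an input $v \in \mathbb{R}^n$, computes $h(v) = \max_{j \in \{1,\dots,k\}} (v^T W_j + b_j)$ with learned parameters $W_j \in \mathbb{R}^n$, $b_j \in \mathbb{R}$; thus it is a convex piecewise linear function of $v$. A maxout network with two maxout hidden units consists of two such units $h_1, h_2$ (each with the same number $k$ of affine components) applied to the input $v$, followed by a linear (affine) output layer producing the real-valued output $g(v) = u_1 h_1(v) + u_2 h_2(v) + c$. *)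

theory Defs
  imports "HOL-Analysis.Analysis"
begin

definition maxout_unit :: "nat \<Rightarrow> (nat \<Rightarrow> real^'n) \<Rightarrow> (nat \<Rightarrow> real) \<Rightarrow> real^'n \<Rightarrow> real" where
  "maxout_unit k W b v = Max ((\<lambda>j. v \<bullet> W j + b j) ` {1..k})"

definition maxout_net2 ::
  "nat \<Rightarrow> (nat \<Rightarrow> nat \<Rightarrow> real^'n) \<Rightarrow> (nat \<Rightarrow> nat \<Rightarrow> real) \<Rightarrow> real \<Rightarrow> real \<Rightarrow> real \<Rightarrow> real^'n \<Rightarrow> real" where
  "maxout_net2 k W b u1 u2 c v =
     u1 * maxout_unit k (W 1) (b 1) v + u2 * maxout_unit k (W 2) (b 2) v + c"

end

theory Submission
  imports Defs "HOL-Analysis.Analysis"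
begin

definition MA :: "('a::real_inner \<Rightarrow> real) \<Rightarrow> bool" where
  "MA h \<longleftrightarrow> (\<exists>A. finite A \<and> A \<noteq> {} \<and> (\<forall>v. h v = Max ((\<lambda>p. v \<bullet> fst p + snd p) ` A)))"

lemma MA_const: "MA (\<lambda>v. c)"
  unfolding MA_def by (rule exI[of _ "{(0, c)}"]) simp

lemma MA_add:
  assumes "MA h1" "MA h2" shows "MA (\<lambda>v. h1 v + h2 v)"
proof -
  obtain A where A: "finite A" "A \<noteq> {}" "\<And>v. h1 v = Max ((\<lambda>p. v \<bullet> fst p + snd p) ` A)"
    using assms(1) unfolding MA_def by blast
  obtain B where B: "finite B" "B \<noteq> {}" "\<And>v. h2 v = Max ((\<lambda>p. v \<bullet> fst p + snd p) ` B)"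
    using assms(2) unfolding MA_def by blast
  define AB where "AB = (\<lambda>(p,q). (fst p + fst q, snd p + snd q)) ` (A \<times> B)"
  have "finite AB" "AB \<noteq> {}" using A B by (auto simp: AB_def)
  moreover have "h1 v + h2 v = Max ((\<lambda>p. v \<bullet> fst p + snd p) ` AB)" for v
  proof (rule Max_eqI[symmetric])
    show "finite ((\<lambda>p. v \<bullet> fst p + snd p) ` AB)" using \<open>finite AB\<close> by simp
    show "y \<le> h1 v + h2 v" if "y \<in> (\<lambda>p. v \<bullet> fst p + snd p) ` AB" for y
    proof -
      from that obtain p q where pq: "p \<in> A" "q \<in> B" "y = v \<bullet> (fst p + fst q) + (snd p + snd q)"
        by (auto simp: AB_def)
      have "v \<bullet> fst p + snd p \<le> h1 v" using A pq by auto
      moreover have "v \<bullet> fst q + snd q \<le> h2 v" using B pq by auto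
      ultimately show ?thesis using pq by (simp add: inner_add_right)
    qed
    have "h1 v \<in> (\<lambda>p. v \<bullet> fst p + snd p) ` A" unfolding A(3) by (rule Max_in) (use A in auto)
    then obtain p where p: "p \<in> A" "h1 v = v \<bullet> fst p + snd p" by blast
    have "h2 v \<in> (\<lambda>p. v \<bullet> fst p + snd p) ` B" unfolding B(3) by (rule Max_in) (use B in auto)
    then obtain q where q: "q \<in> B" "h2 v = v \<bullet> fst q + snd q" by blast
    have "(fst p + fst q, snd p + snd q) \<in> AB" using p q by (force simp: AB_def)
    then show "h1 v + h2 v \<in> (\<lambda>p. v \<bullet> fst p + snd p) ` AB"
      using p q by (force simp: inner_add_right intro: image_eqI)
  qed
  ultimately show ?thesis unfolding MA_def by blast
qed

lemma MA_sum:
  assumes "finite I" "\<And>i. i \<in> I \<Longrightarrow> MA (h i)" shows "MA (\<lambda>v. \<Sum>i\<in>I. h i v)"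
  using assms by (induction I rule: finite_induct) (auto intro: MA_const MA_add)

lemma MA_Max:
  assumes "finite T" "T \<noteq> {}" "\<And>a. a \<in> T \<Longrightarrow> MA (h a)"
  shows "MA (\<lambda>v. Max ((\<lambda>a. h a v) ` T))"
proof -
  have "\<forall>a\<in>T. \<exists>A. finite A \<and> A \<noteq> {} \<and> (\<forall>v. h a v = Max ((\<lambda>p. v \<bullet> fst p + snd p) ` A))"
    using assms(3) unfolding MA_def by blast
  then obtain F where F: "\<And>a. a \<in> T \<Longrightarrow> finite (F a) \<and> F a \<noteq> {} \<and> (\<forall>v. h a v = Max ((\<lambda>p. v \<bullet> fst p + snd p) ` F a))"
    by metis
  define U where "U = (\<Union>a\<in>T. F a)"
  have "finite U" "U \<noteq> {}" using F assms by (auto simp: U_def)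
  moreover have "Max ((\<lambda>a. h a v) ` T) = Max ((\<lambda>p. v \<bullet> fst p + snd p) ` U)" for v
  proof (rule Max_eqI[symmetric])
    show "finite ((\<lambda>p. v \<bullet> fst p + snd p) ` U)" using \<open>finite U\<close> by simp
    show "y \<le> Max ((\<lambda>a. h a v) ` T)" if "y \<in> (\<lambda>p. v \<bullet> fst p + snd p) ` U" for y
    proof -
      from that obtain a p where ap: "a \<in> T" "p \<in> F a" "y = v \<bullet> fst p + snd p"
        by (auto simp: U_def)
      have "y \<le> h a v" using F[OF ap(1)] ap by auto
      also have "\<dots> \<le> Max ((\<lambda>a. h a v) ` T)" using assms ap by auto
      finally show ?thesis .
    qed
    have "Max ((\<lambda>a. h a v) ` T) \<in> (\<lambda>a. h a v) ` T" by (rule Max_in) (use assms in auto)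
    then obtain a where a: "a \<in> T" "Max ((\<lambda>a. h a v) ` T) = h a v" by auto
    have Fa: "finite (F a)" "F a \<noteq> {}" "h a v = Max ((\<lambda>p. v \<bullet> fst p + snd p) ` F a)" using F[OF a(1)] by auto
    have "h a v \<in> (\<lambda>p. v \<bullet> fst p + snd p) ` F a" unfolding Fa(3) by (rule Max_in) (use Fa in auto)
    then obtain p where p: "p \<in> F a" "h a v = v \<bullet> fst p + snd p" by blast
    show "Max ((\<lambda>a. h a v) ` T) \<in> (\<lambda>p. v \<bullet> fst p + snd p) ` U"
      using a p by (auto simp: U_def)
  qed
  ultimately show ?thesis unfolding MA_def by blast
qed

definition SB :: "'a::euclidean_space set" where "SB = Basis \<union> uminus ` Basis"
definition NI :: "'a::euclidean_space \<Rightarrow> real" where "NI x = Max ((\<lambda>s. x \<bullet> s) ` SB)"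

lemma SB_fin: "finite SB" "SB \<noteq> {}" by (auto simp: SB_def)

lemma NI_le: "NI x \<le> norm x"
  unfolding NI_def using SB_fin
  by (auto simp: SB_def intro!: Max.boundedI) (metis abs_le_D1 Basis_le_norm, metis abs_le_D2 Basis_le_norm)

lemma NI_ge: "\<bar>x \<bullet> b\<bar> \<le> NI x" if "b \<in> Basis"
proof -
  have "x \<bullet> b \<le> NI x" unfolding NI_def using SB_fin that
    by (auto simp: SB_def intro!: Max_ge)
  moreover have "-b \<in> SB" using that unfolding SB_def by blast
  then have "x \<bullet> (-b) \<le> NI x" unfolding NI_def using SB_fin
    by (intro Max_ge) (auto intro!: image_eqI[where x="-b"])
  ultimately show ?thesis by auto
qed

lemma norm_le_NI: "norm x \<le> real DIM('a) * NI (x::'a::euclidean_space)"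
proof -
  have "norm x \<le> (\<Sum>b\<in>Basis. \<bar>x \<bullet> b\<bar>)" by (rule norm_le_l1)
  also have "\<dots> \<le> (\<Sum>b\<in>(Basis::'a set). NI x)" by (rule sum_mono) (rule NI_ge)
  also have "\<dots> = real DIM('a) * NI x" by simp
  finally show ?thesis .
qed

lemma MA_NI:
  assumes "L \<ge> 0" shows "MA (\<lambda>v. L * NI (v - a))"
proof -
  define A where "A = (\<lambda>s. (L *\<^sub>R s, - (L *\<^sub>R s) \<bullet> a)) ` (SB::'a set)"
  have "finite A" "A \<noteq> {}" using SB_fin by (auto simp: A_def)
  moreover have "L * NI (v - a) = Max ((\<lambda>p. v \<bullet> fst p + snd p) ` A)" for v
  proof -
    have "L * NI (v - a) = Max ((*) L ` (\<lambda>s. (v - a) \<bullet> s) ` SB)"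
      unfolding NI_def using SB_fin assms
      by (intro mono_Max_commute) (auto simp: mono_def mult_left_mono)
    also have "(*) L ` (\<lambda>s. (v - a) \<bullet> s) ` SB = (\<lambda>p. v \<bullet> fst p + snd p) ` A"
      unfolding A_def image_image by (intro image_cong) (auto simp: inner_diff_left inner_commute algebra_simps)
    finally show ?thesis .
  qed
  ultimately show ?thesis unfolding MA_def by blast
qed


lemma MA_index:
  assumes "finite A" "A \<noteq> {}" "card A \<le> k"
  shows "\<exists>(W::nat \<Rightarrow> 'a::real_inner) b. \<forall>v. Max ((\<lambda>j. v \<bullet> W j + b j) ` {1..k}) = Max ((\<lambda>p. v \<bullet> fst p + snd p) ` A)"
proof -
  obtain h where h: "bij_betw h {1..card A} A" using ex_bij_betw_nat_finite_1[OF assms(1)] by blast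
  have c1: "card A \<ge> 1" using assms by (simp add: Suc_le_eq card_gt_0_iff)
  define \<phi> where "\<phi> j = (if j \<le> card A then h j else h 1)" for j
  have "\<phi> ` {1..k} = A"
  proof
    show "\<phi> ` {1..k} \<subseteq> A" using h c1 unfolding \<phi>_def bij_betw_def by auto
    show "A \<subseteq> \<phi> ` {1..k}"
    proof
      fix x assume "x \<in> A"
      then have "x \<in> h ` {1..card A}" using h unfolding bij_betw_def by simp
      then obtain j where j: "j \<in> {1..card A}" "x = h j" by blast
      then have "\<phi> j = x" "j \<in> {1..k}" using assms(3) by (auto simp: \<phi>_def)
      then show "x \<in> \<phi> ` {1..k}" by blast
    qed
  qed
  have eqv: "\<forall>v. Max ((\<lambda>j. v \<bullet> fst (\<phi> j) + snd (\<phi> j)) ` {1..k}) = Max ((\<lambda>p. v \<bullet> fst p + snd p) ` A)"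
  proof
    fix v
    have "(\<lambda>j. v \<bullet> fst (\<phi> j) + snd (\<phi> j)) ` {1..k} = (\<lambda>p. v \<bullet> fst p + snd p) ` (\<phi> ` {1..k})"
      by (simp add: image_image)
    then show "Max ((\<lambda>j. v \<bullet> fst (\<phi> j) + snd (\<phi> j)) ` {1..k}) = Max ((\<lambda>p. v \<bullet> fst p + snd p) ` A)"
      using \<open>\<phi> ` {1..k} = A\<close> by simp
  qed
  show ?thesis by (intro exI[of _ "\<lambda>j. fst (\<phi> j)"] exI[of _ "\<lambda>j. snd (\<phi> j)"]) (use eqv in simp)
qed

lemma NI_nonneg: "0 \<le> NI (x::'a::euclidean_space)"
proof -
  obtain b :: 'a where "b \<in> Basis" using nonempty_Basis by blast
  then show ?thesis using NI_ge[of b x] by linarith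
qed

theorem theorem1:
  fixes C :: "(real^'n) set" and f :: "real^'n \<Rightarrow> real" and \<epsilon> :: real
  assumes "compact C" and "continuous_on C f" and "\<epsilon> > 0"
  shows "\<exists>k::nat. k > 0 \<and> (\<exists>(W::nat \<Rightarrow> nat \<Rightarrow> real^'n) (b::nat \<Rightarrow> nat \<Rightarrow> real) u1 u2 c.
           \<forall>v\<in>C. \<bar>f v - maxout_net2 k W b u1 u2 c v\<bar> < \<epsilon>)"
proof (cases "C = {}")
  case True
  then show ?thesis by (intro exI[of _ "1::nat"]) auto
next
  case False
  have "bounded (f ` C)" using assms by (intro compact_imp_bounded compact_continuous_image)
  then obtain M where M0: "M > 0" and M: "\<And>x. x \<in> C \<Longrightarrow> \<bar>f x\<bar> \<le> M"
    unfolding bounded_pos by auto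
  have "uniformly_continuous_on C f" using assms by (intro compact_uniformly_continuous)
  then obtain \<delta> where \<delta>0: "\<delta> > 0" and \<delta>: "\<And>x x'. x \<in> C \<Longrightarrow> x' \<in> C \<Longrightarrow> dist x' x < \<delta> \<Longrightarrow> dist (f x') (f x) < \<epsilon>/2"
    unfolding uniformly_continuous_on_def using assms(3) by (metis half_gt_zero)
  define D where "D = real DIM(real^'n)"
  have D0: "D > 0" by (simp add: D_def)
  define L where "L = (2*M+1)*D/\<delta>"
  have L0: "L > 0" using M0 D0 \<delta>0 by (simp add: L_def)
  define \<eta> where "\<eta> = min \<delta> (\<epsilon>/(2*L))"
  have \<eta>0: "\<eta> > 0" using \<delta>0 L0 assms(3) by (simp add: \<eta>_def)
  obtain T where T: "T \<subseteq> C" "finite T" "C \<subseteq> (\<Union>a\<in>T. ball a \<eta>)"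
    using compactE_image[OF assms(1), of C "\<lambda>x. ball x \<eta>"] \<eta>0 by force
  have Tne: "T \<noteq> {}" using T False by auto
  define P where "P a v = L * NI (v - a)" for a v :: "real^'n"
  define G2 where "G2 v = (\<Sum>a\<in>T. P a v)" for v
  define G1 where "G1 v = Max ((\<lambda>a. f a + (\<Sum>c\<in>T-{a}. P c v)) ` T)" for v
  have MA2: "MA G2" unfolding G2_def P_def using T L0 by (intro MA_sum MA_NI) auto
  have MA1: "MA G1" unfolding G1_def P_def using T Tne L0
    by (intro MA_Max MA_add MA_const MA_sum MA_NI) auto
  have split: "G2 v = P a v + (\<Sum>c\<in>T-{a}. P c v)" if "a \<in> T" for a v
    unfolding G2_def using T(2) that by (simp add: sum.remove)
  have ge: "G1 v - G2 v \<ge> f a - P a v" if "a \<in> T" for a v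
  proof -
    have "f a + (\<Sum>c\<in>T-{a}. P c v) \<le> G1 v" unfolding G1_def using T(2) that by (intro Max_ge) auto
    then show ?thesis using split[OF that, of v] by linarith
  qed
  have ex: "\<exists>a\<in>T. G1 v - G2 v = f a - P a v" for v
  proof -
    have "G1 v \<in> (\<lambda>a. f a + (\<Sum>c\<in>T-{a}. P c v)) ` T" unfolding G1_def by (rule Max_in) (use T Tne in auto)
    then obtain a where "a \<in> T" "G1 v = f a + (\<Sum>c\<in>T-{a}. P c v)" by auto
    then show ?thesis using split[of a v] by auto
  qed
  have approx: "\<bar>f v - (G1 v - G2 v)\<bar> < \<epsilon>" if v: "v \<in> C" for v
  proof -
    obtain a where a: "a \<in> T" "G1 v - G2 v = f a - P a v" using ex by blast
    have aC: "a \<in> C" using a T by auto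
    have "f a - P a v < f v + \<epsilon>"
    proof (cases "dist v a < \<delta>")
      case True
      then have "dist (f a) (f v) < \<epsilon>/2" using \<delta>[OF v aC] by (simp add: dist_commute)
      moreover have "P a v \<ge> 0" unfolding P_def using L0 NI_nonneg[of "v - a"] by simp
      ultimately show ?thesis using assms(3) unfolding dist_real_def by arith
    next
      case False
      then have "\<delta> \<le> norm (v - a)" by (simp add: dist_norm)
      also have "\<dots> \<le> D * NI (v - a)" unfolding D_def by (rule norm_le_NI)
      finally have "\<delta> \<le> D * NI (v - a)" .
      then have "(2*M+1) * \<delta> \<le> (2*M+1) * (D * NI (v - a))" using M0 by (intro mult_left_mono) auto
      then have "2*M+1 \<le> P a v" unfolding P_def L_def using \<delta>0 by (simp add: field_simps)
      moreover have "\<bar>f a\<bar> \<le> M" "\<bar>f v\<bar> \<le> M" using M aC v by auto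
      ultimately show ?thesis using assms(3) by linarith
    qed
    moreover have "f v - \<epsilon> < G1 v - G2 v"
    proof -
      obtain a' where a': "a' \<in> T" "v \<in> ball a' \<eta>" using T v by auto
      have a'C: "a' \<in> C" using a' T by auto
      have da: "dist v a' < \<eta>" using a' by (simp add: dist_commute)
      then have "dist (f a') (f v) < \<epsilon>/2" using \<delta>[OF v a'C] by (simp add: dist_commute \<eta>_def)
      moreover have "P a' v \<le> L * norm (v - a')" unfolding P_def using L0 NI_le by (simp add: mult_left_mono)
      moreover have "L * norm (v - a') < L * \<eta>" using L0 da by (simp add: dist_norm)
      moreover have "L * \<eta> \<le> \<epsilon>/2" unfolding \<eta>_def using L0
        by (metis (no_types, lifting) min.cobounded2 mult.commute nonzero_mult_div_cancel_left
            order_less_irrefl mult_left_mono less_eq_real_def divide_divide_eq_left' times_divide_eq_right)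
      ultimately have "f v - \<epsilon> < f a' - P a' v" unfolding dist_real_def by arith
      also have "\<dots> \<le> G1 v - G2 v" using ge[OF a'(1)] .
      finally show ?thesis .
    qed
    ultimately show ?thesis using a by linarith
  qed
  obtain A1 where A1: "finite A1" "A1 \<noteq> {}" "\<And>v. G1 v = Max ((\<lambda>p. v \<bullet> fst p + snd p) ` A1)"
    using MA1 unfolding MA_def by blast
  obtain A2 where A2: "finite A2" "A2 \<noteq> {}" "\<And>v. G2 v = Max ((\<lambda>p. v \<bullet> fst p + snd p) ` A2)"
    using MA2 unfolding MA_def by blast
  define k where "k = max (card A1) (card A2)"
  have k0: "k > 0" using A1 by (simp add: k_def card_gt_0_iff less_max_iff_disj)
  obtain W1 :: "nat \<Rightarrow> real^'n" and b1 where W1: "\<And>v. Max ((\<lambda>j. v \<bullet> W1 j + b1 j) ` {1..k}) = G1 v"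
    using MA_index[OF A1(1,2), of k] A1(3) by (auto simp: k_def)
  obtain W2 :: "nat \<Rightarrow> real^'n" and b2 where W2: "\<And>v. Max ((\<lambda>j. v \<bullet> W2 j + b2 j) ` {1..k}) = G2 v"
    using MA_index[OF A2(1,2), of k] A2(3) by (auto simp: k_def)
  define W :: "nat \<Rightarrow> nat \<Rightarrow> real^'n" where "W i = (if i = 1 then W1 else W2)" for i
  define b :: "nat \<Rightarrow> nat \<Rightarrow> real" where "b i = (if i = 1 then b1 else b2)" for i
  have "maxout_net2 k W b 1 (-1) 0 v = G1 v - G2 v" for v
    unfolding maxout_net2_def maxout_unit_def W_def b_def using W1 W2 by simp
  then show ?thesis using k0 approx
    by (intro exI[of _ k] conjI exI[of _ W] exI[of _ b] exI[of _ "1::real"] exI[of _ "-1::real"] exI[of _ "0::real"]) auto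
qed

end
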